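(* Let $n\geq 2$, let $\Omega\subset\mathbb{R}^n$ be a bounded open set, and let $u\in C^2(\Omega)\cap C(\overline\Omega)$ be the solution of $$\Delta u=-1\ \text{in }\Omega,\qquad u=0\ \text{on }\partial\Omega.$$ Let $M=\max_{\overline\Omega}u$. If $u$ satisfies property (A) in $\Omega$, i.e. $\Omega$ is convex and the function $w(x)=\sqrt{M-u(x)}$ is convex in $\Omega$, then $\Omega$ is an ellipsoid and $u$ is the torsion function of that ellipsoid, namely, in suitable Cartesian coordinates, $\Omega=E=\{x:\sum_{i=1}^n a_i(x_i-\bar x_i)^2<R^2\}$ with $a_i>0$, $\sum_{i=1}^n a_i=n$, and $u(x)=u_E(x)=\frac{R^2-\sum_{i=1}^n a_i(x_i-\bar x_i)^2}{2n}$.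
   Context: The solution $u$ of $\Delta u=-1$ in $\Omega$, $u=0$ on $\partial\Omega$ is called the torsion function of $\Omega$. For a bounded convex open set $\Omega$, a function $v\in C(\overline\Omega)$ is said to satisfy property (A) in $\Omega$ if $\sqrt{M-v(x)}$ is convex in $\Omega$, where $M=\max_{\overline\Omega}v$. *)

theory Defs
  imports "HOL-Analysis.Analysis"
begin

definition C2_on :: "(real^'n) set \<Rightarrow> (real^'n \<Rightarrow> real) \<Rightarrow> bool" where
  "C2_on S f \<longleftrightarrow>
     (\<exists>Df :: (real^'n) \<Rightarrow> ((real^'n) \<Rightarrow>\<^sub>L real).
      \<exists>D2f :: (real^'n) \<Rightarrow> ((real^'n) \<Rightarrow>\<^sub>L ((real^'n) \<Rightarrow>\<^sub>L real)).
        (\<forall>x\<in>S. (f has_derivative blinfun_apply (Df x)) (at x)) \<and>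
        (\<forall>x\<in>S. (Df has_derivative blinfun_apply (D2f x)) (at x)) \<and>
        continuous_on S D2f)"

definition partial2 :: "'n::finite \<Rightarrow> (real^'n \<Rightarrow> real) \<Rightarrow> real^'n \<Rightarrow> real" where
  "partial2 i f x =
     frechet_derivative (\<lambda>y. frechet_derivative f (at y) (axis i 1)) (at x) (axis i 1)"

definition laplacian :: "(real^'n \<Rightarrow> real) \<Rightarrow> real^'n \<Rightarrow> real" where
  "laplacian f x = (\<Sum>i\<in>UNIV. partial2 i f x)"

end

theory Submission
  imports Defs
begin


definition c2 :: "'a::real_normed_vector set \<Rightarrow> ('a \<Rightarrow> real) \<Rightarrow> ('a \<Rightarrow> 'a \<Rightarrow> real) \<Rightarrow> ('a \<Rightarrow> 'a \<Rightarrow> 'a \<Rightarrow> real) \<Rightarrow> bool" where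
"c2 U f Df D2f \<longleftrightarrow> (\<forall>y\<in>U. (f has_derivative Df y) (at y)) \<and>
   (\<forall>y\<in>U. \<forall>v. ((\<lambda>z. Df z v) has_derivative (\<lambda>k. D2f y k v)) (at y)) \<and>
   (\<forall>v. continuous_on U (\<lambda>y. D2f y v v))"

lemma c2_taylor:
  assumes c: "c2 U f Df D2f" and h: "0 < h" and seg: "\<And>t. 0 \<le> t \<Longrightarrow> t \<le> h \<Longrightarrow> x + t *\<^sub>R w \<in> U"
  shows "\<exists>\<tau>. 0 < \<tau> \<and> \<tau> < h \<and> f (x + h *\<^sub>R w) = f x + h * Df x w + D2f (x + \<tau> *\<^sub>R w) w w / 2 * h^2"
proof -
  define diff where "diff = (\<lambda>m::nat. if m = 0 then (\<lambda>t. f (x + t *\<^sub>R w))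
     else if m = 1 then (\<lambda>t. Df (x + t *\<^sub>R w) w) else (\<lambda>t. D2f (x + t *\<^sub>R w) w w))"
  have lin: "((\<lambda>t::real. x + t *\<^sub>R w) has_derivative (\<lambda>s. s *\<^sub>R w)) (at t)" for t
    by (auto intro!: derivative_eq_intros)
  have D: "DERIV (diff m) t :> diff (Suc m) t" if "m < 2" "0 \<le> t" "t \<le> h" for m t
  proof -
    have U: "x + t *\<^sub>R w \<in> U" using seg that by auto
    show ?thesis
    proof (cases "m = 0")
      case True
      have d: "(f has_derivative Df (x + t *\<^sub>R w)) (at (x + t *\<^sub>R w))" using c U by (auto simp: c2_def)
      have "((\<lambda>t. f (x + t *\<^sub>R w)) has_derivative (\<lambda>s. Df (x + t *\<^sub>R w) (s *\<^sub>R w))) (at t)"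
        by (rule has_derivative_compose[OF lin d])
      moreover have "linear (Df (x + t *\<^sub>R w))" using has_derivative_linear[OF d] .
      ultimately show ?thesis using True
        by (auto simp: diff_def linear_scale intro!: has_derivative_imp_has_field_derivative)
    next
      case False
      then have m1: "m = 1" using that by auto
      have d: "((\<lambda>z. Df z w) has_derivative (\<lambda>k. D2f (x + t *\<^sub>R w) k w)) (at (x + t *\<^sub>R w))" using c U by (auto simp: c2_def)
      have "((\<lambda>t. Df (x + t *\<^sub>R w) w) has_derivative (\<lambda>s. D2f (x + t *\<^sub>R w) (s *\<^sub>R w) w)) (at t)"
        by (rule has_derivative_compose[OF lin d])
      moreover have "linear (\<lambda>k. D2f (x + t *\<^sub>R w) k w)" using has_derivative_linear[OF d] .
      then have "D2f (x + t *\<^sub>R w) (s *\<^sub>R w) w = s * D2f (x + t *\<^sub>R w) w w" for s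
        using linear_scale[of "\<lambda>k. D2f (x + t *\<^sub>R w) k w" s w] by simp
      ultimately show ?thesis using m1
        by (auto simp: diff_def intro!: has_derivative_imp_has_field_derivative)
    qed
  qed
  obtain \<tau> where "0 < \<tau>" "\<tau> < h" and eq: "diff 0 h = (\<Sum>m<2. diff m 0 / fact m * h ^ m) + diff 2 \<tau> / fact 2 * h ^ 2"
    using Maclaurin[OF h _ refl, of 2 diff] D by auto
  moreover have "(\<Sum>m<2. diff m 0 / fact m * h ^ m) = f x + h * Df x w"
    by (simp add: diff_def numeral_2_eq_2)
  ultimately show ?thesis by (auto simp: diff_def)
qed

lemma c2_min_D2:
  assumes c: "c2 U f Df D2f" and U: "open U" and x: "x \<in> U" and mn: "\<forall>y\<in>U. f x \<le> f y"
  shows "0 \<le> D2f x v v"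
proof (rule ccontr)
  assume "\<not> ?thesis"
  then have neg: "D2f x v v < 0" by simp
  have dx: "(f has_derivative Df x) (at x)" using c x by (auto simp: c2_def)
  have Dz: "Df x = (\<lambda>v. 0)" by (rule differential_zero_maxmin[OF x U dx]) (use mn in auto)
  have "continuous_on U (\<lambda>y. D2f y v v)" using c by (auto simp: c2_def)
  then obtain \<delta> where \<delta>: "\<delta> > 0" "\<forall>y\<in>U. dist y x < \<delta> \<longrightarrow> dist (D2f y v v) (D2f x v v) < - D2f x v v"
    using x neg unfolding continuous_on_iff by (metis neg_0_less_iff_less)
  obtain r where r: "r > 0" "ball x r \<subseteq> U" using U x open_contains_ball by blast
  define t where "t = min \<delta> r / (2 * (norm v + 1))"
  have t: "t > 0" using \<delta> r unfolding t_def by (intro divide_pos_pos) (auto, smt (verit) norm_ge_zero)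
  have tn: "t * norm v < min \<delta> r"
  proof -
    have "t * norm v \<le> t * (norm v + 1)" using t by auto
    also have "\<dots> = min \<delta> r / 2"
    proof -
      have nv: "norm v + 1 \<noteq> 0" by (smt (verit) norm_ge_zero)
      show ?thesis unfolding t_def using nv by (simp add: field_simps)
    qed
    also have "\<dots> < min \<delta> r" using \<delta> r by auto
    finally show ?thesis .
  qed
  have inb: "dist (x + s *\<^sub>R v) x < min \<delta> r" if "0 \<le> s" "s \<le> t" for s
  proof -
    have "dist (x + s *\<^sub>R v) x = s * norm v" using that by (simp add: dist_norm)
    also have "\<dots> \<le> t * norm v" using that by (simp add: mult_right_mono)
    finally show ?thesis using tn by linarith
  qed
  have seg: "x + s *\<^sub>R v \<in> U" if "0 \<le> s" "s \<le> t" for s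
    using inb[OF that] r by (auto simp: dist_commute)
  obtain \<tau> where \<tau>: "0 < \<tau>" "\<tau> < t" and eq: "f (x + t *\<^sub>R v) = f x + t * Df x v + D2f (x + \<tau> *\<^sub>R v) v v / 2 * t^2"
    using c2_taylor[OF c t seg] by blast
  have "D2f (x + \<tau> *\<^sub>R v) v v < 0"
    using \<delta>(2) seg[of \<tau>] inb[of \<tau>] \<tau> by (auto simp: dist_real_def)
  then have "f (x + t *\<^sub>R v) < f x" using eq Dz t by (simp add: mult_neg_pos)
  moreover have "f x \<le> f (x + t *\<^sub>R v)" using mn seg[of t] t by auto
  ultimately show False by simp
qed

lemma c2_diff:
  assumes "c2 U f Df D2f" "c2 U g Dg D2g"
  shows "c2 U (\<lambda>x. f x - g x) (\<lambda>y k. Df y k - Dg y k) (\<lambda>y k v. D2f y k v - D2g y k v)"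
  using assms unfolding c2_def by (auto intro!: derivative_eq_intros continuous_intros)

lemma c2_add:
  assumes "c2 U f Df D2f" "c2 U g Dg D2g"
  shows "c2 U (\<lambda>x. f x + g x) (\<lambda>y k. Df y k + Dg y k) (\<lambda>y k v. D2f y k v + D2g y k v)"
  using assms unfolding c2_def by (auto intro!: derivative_eq_intros continuous_intros)

lemma c2_cmult:
  assumes "c2 U f Df D2f"
  shows "c2 U (\<lambda>x. c * f x) (\<lambda>y k. c * Df y k) (\<lambda>y k v. c * D2f y k v)"
  using assms unfolding c2_def by (auto intro!: derivative_eq_intros continuous_intros)

lemma c2_const: "c2 U (\<lambda>x. c) (\<lambda>y k. 0) (\<lambda>y k v. 0)"
  unfolding c2_def by (auto intro!: derivative_eq_intros continuous_intros)

lemma C2_on_c2: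
  assumes "C2_on S u"
  obtains Du :: "(real^'n) \<Rightarrow> ((real^'n) \<Rightarrow>\<^sub>L real)" and D2u
  where "c2 S u (\<lambda>y. blinfun_apply (Du y)) (\<lambda>y k v. blinfun_apply (blinfun_apply (D2u y) k) v)"
    and "\<forall>x\<in>S. (u has_derivative blinfun_apply (Du x)) (at x)"
    and "\<forall>x\<in>S. (Du has_derivative blinfun_apply (D2u x)) (at x)"
proof -
  obtain Du :: "(real^'n) \<Rightarrow> ((real^'n) \<Rightarrow>\<^sub>L real)" and D2u where
    d1: "\<forall>x\<in>S. (u has_derivative blinfun_apply (Du x)) (at x)" and
    d2: "\<forall>x\<in>S. (Du has_derivative blinfun_apply (D2u x)) (at x)" and
    ct: "continuous_on S D2u"
    using assms unfolding C2_on_def by blast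
  have "c2 S u (\<lambda>y. blinfun_apply (Du y)) (\<lambda>y k v. blinfun_apply (blinfun_apply (D2u y) k) v)"
    unfolding c2_def
  proof (intro conjI ballI allI)
    fix y assume "y \<in> S" then show "(u has_derivative blinfun_apply (Du y)) (at y)" using d1 by auto
  next
    fix y v assume "y \<in> S"
    then have d: "(Du has_derivative blinfun_apply (D2u y)) (at y)" using d2 by auto
    show "((\<lambda>z. blinfun_apply (Du z) v) has_derivative (\<lambda>k. blinfun_apply (blinfun_apply (D2u y) k) v)) (at y)"
      using blinfun.FDERIV[OF d has_derivative_const[of v]] by simp
  next
    fix v show "continuous_on S (\<lambda>y. blinfun_apply (blinfun_apply (D2u y) v) v)"
      by (intro blinfun.continuous_on ct continuous_on_const)
  qed
  then show ?thesis using that d1 d2 by blast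
qed

lemma laplacian_eq:
  fixes u :: "real^'n \<Rightarrow> real"
  assumes S: "open S" and x: "x \<in> S"
    and d1: "\<forall>x\<in>S. (u has_derivative blinfun_apply (Du x)) (at x)"
    and d2: "\<forall>x\<in>S. (Du has_derivative blinfun_apply (D2u x)) (at x)"
  shows "laplacian u x = (\<Sum>i\<in>UNIV. blinfun_apply (blinfun_apply (D2u x) (axis i 1)) (axis i 1))"
  unfolding laplacian_def
proof (rule sum.cong[OF refl])
  fix i :: 'n
  have fd: "frechet_derivative u (at y) = blinfun_apply (Du y)" if "y \<in> S" for y
    using frechet_derivative_at[of u "blinfun_apply (Du y)" y] d1 that by auto
  have d: "((\<lambda>z. blinfun_apply (Du z) (axis i 1)) has_derivative (\<lambda>k. blinfun_apply (blinfun_apply (D2u x) k) (axis i 1))) (at x)"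
    using blinfun.FDERIV[OF d2[rule_format, OF x] has_derivative_const[of "axis i 1"]] by simp
  have "((\<lambda>y. frechet_derivative u (at y) (axis i 1)) has_derivative (\<lambda>k. blinfun_apply (blinfun_apply (D2u x) k) (axis i 1))) (at x)"
    by (rule has_derivative_transform_within_open[OF d S x]) (simp add: fd)
  then show "partial2 i u x = blinfun_apply (blinfun_apply (D2u x) (axis i 1)) (axis i 1)"
    unfolding partial2_def using frechet_derivative_at by metis
qed

lemma c2_subset: "c2 U f Df D2f \<Longrightarrow> V \<subseteq> U \<Longrightarrow> c2 V f Df D2f"
  unfolding c2_def by (auto intro: continuous_on_subset)

lemma c2_lower:
  assumes c: "c2 U f Df D2f" and U: "open U" and x: "x \<in> U"
    and seg: "\<And>t. 0 \<le> t \<Longrightarrow> t \<le> 1 \<Longrightarrow> x + t *\<^sub>R v \<in> U"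
    and bd: "\<And>t. 0 < t \<Longrightarrow> t \<le> 1 \<Longrightarrow> t^2 * K \<le> f (x + t *\<^sub>R v) - f x - t * Df x v"
  shows "K \<le> D2f x v v / 2"
proof (rule ccontr)
  assume "\<not> ?thesis"
  then have neg: "D2f x v v / 2 < K" by simp
  have "continuous_on U (\<lambda>y. D2f y v v)" using c by (auto simp: c2_def)
  then obtain \<delta> where \<delta>: "\<delta> > 0" "\<forall>y\<in>U. dist y x < \<delta> \<longrightarrow> dist (D2f y v v) (D2f x v v) < 2 * K - D2f x v v"
    using x neg unfolding continuous_on_iff by (metis diff_gt_0_iff_gt divide_less_eq_numeral1(1) mult.commute)
  define t where "t = min 1 (\<delta> / (2 * (norm v + 1)))"
  have nv: "norm v + 1 > 0" by (smt (verit) norm_ge_zero)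
  have t: "t > 0" "t \<le> 1" using \<delta> nv by (auto simp: t_def)
  have tn: "t * norm v < \<delta>"
  proof -
    have "t * norm v \<le> t * (norm v + 1)" using t by auto
    also have "\<dots> \<le> \<delta> / (2 * (norm v + 1)) * (norm v + 1)" using nv by (intro mult_right_mono) (auto simp: t_def)
    also have "\<dots> = \<delta> / 2" using nv by (simp add: field_simps)
    also have "\<dots> < \<delta>" using \<delta> by auto
    finally show ?thesis .
  qed
  have seg': "x + s *\<^sub>R v \<in> U" if "0 \<le> s" "s \<le> t" for s using seg that t by auto
  obtain \<tau> where \<tau>: "0 < \<tau>" "\<tau> < t" and eq: "f (x + t *\<^sub>R v) = f x + t * Df x v + D2f (x + \<tau> *\<^sub>R v) v v / 2 * t^2"
    using c2_taylor[OF c t(1) seg'] by blast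
  have "dist (x + \<tau> *\<^sub>R v) x = \<tau> * norm v" using \<tau> by (simp add: dist_norm)
  also have "\<dots> \<le> t * norm v" using \<tau> by (simp add: mult_right_mono)
  finally have "dist (x + \<tau> *\<^sub>R v) x < \<delta>" using tn by linarith
  then have "D2f (x + \<tau> *\<^sub>R v) v v < 2 * K"
    using \<delta>(2) seg'[of \<tau>] \<tau> by (auto simp: dist_real_def)
  then have "D2f (x + \<tau> *\<^sub>R v) v v / 2 * t^2 < K * t^2" using t by simp
  moreover have "t^2 * K \<le> D2f (x + \<tau> *\<^sub>R v) v v / 2 * t^2" using bd[OF t] eq by simp
  ultimately show False by (simp add: mult.commute)
qed

definition lap :: "(real^'n \<Rightarrow> real^'n \<Rightarrow> real^'n \<Rightarrow> real) \<Rightarrow> real^'n \<Rightarrow> real" where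
  "lap D2 x = (\<Sum>i\<in>UNIV. D2 x (axis i 1) (axis i 1))"

lemma c2_min_lap:
  assumes c: "c2 U f Df D2f" and U: "open U" and x: "x \<in> U" and mn: "\<forall>y\<in>U. f x \<le> f y"
  shows "0 \<le> lap D2f x"
  unfolding lap_def by (intro sum_nonneg c2_min_D2[OF c U x mn])

lemma barrier_c2:
  fixes y :: "real^'n"
  shows "c2 U (\<lambda>x. (d^2 - (x-y)\<bullet>(x-y)) + \<beta> * (d^2 - (x-y)\<bullet>(x-y))^2)
     (\<lambda>x k. - (1 + 2*\<beta>*(d^2 - (x-y)\<bullet>(x-y))) * (2 * ((x-y)\<bullet>k)))
     (\<lambda>x k w. 8*\<beta>*((x-y)\<bullet>k)*((x-y)\<bullet>w) - 2*(1 + 2*\<beta>*(d^2 - (x-y)\<bullet>(x-y)))*(k\<bullet>w))"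
  unfolding c2_def
proof (intro conjI ballI allI)
  fix x assume "x \<in> U"
  show "((\<lambda>x. (d^2 - (x-y)\<bullet>(x-y)) + \<beta> * (d^2 - (x-y)\<bullet>(x-y))^2) has_derivative
     (\<lambda>k. - (1 + 2*\<beta>*(d^2 - (x-y)\<bullet>(x-y))) * (2 * ((x-y)\<bullet>k)))) (at x)"
    by (auto intro!: derivative_eq_intros simp: inner_commute algebra_simps power2_eq_square)
next
  fix x w assume "x \<in> U"
  show "((\<lambda>z. - (1 + 2*\<beta>*(d^2 - (z-y)\<bullet>(z-y))) * (2 * ((z-y)\<bullet>w))) has_derivative
     (\<lambda>k. 8*\<beta>*((x-y)\<bullet>k)*((x-y)\<bullet>w) - 2*(1 + 2*\<beta>*(d^2 - (x-y)\<bullet>(x-y)))*(k\<bullet>w))) (at x)"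
    by (auto intro!: derivative_eq_intros simp: inner_commute algebra_simps)
next
  fix w show "continuous_on U (\<lambda>x. 8*\<beta>*((x-y)\<bullet>w)*((x-y)\<bullet>w) - 2*(1 + 2*\<beta>*(d^2 - (x-y)\<bullet>(x-y)))*(w\<bullet>w))"
    by (intro continuous_intros)
qed

lemma barrier_lap:
  fixes y :: "real^'n"
  shows "lap (\<lambda>x k w. 8*\<beta>*((x-y)\<bullet>k)*((x-y)\<bullet>w) - 2*(1 + 2*\<beta>*(d^2 - (x-y)\<bullet>(x-y)))*(k\<bullet>w)) x
     = 8*\<beta>*((x-y)\<bullet>(x-y)) - 2 * real CARD('n) * (1 + 2*\<beta>*(d^2 - (x-y)\<bullet>(x-y)))"
proof -
  have ax: "(x-y) \<bullet> axis i 1 = (x-y) $ i" for i by (simp add: inner_axis)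
  have "(\<Sum>i\<in>UNIV. ((x-y) \<bullet> axis i 1) * ((x-y) \<bullet> axis i 1)) = (x-y)\<bullet>(x-y)"
    unfolding ax by (simp add: inner_vec_def)
  then show ?thesis
    by (simp add: lap_def sum_subtractf sum_distrib_left[symmetric] mult.assoc inner_axis_axis)
qed



locale symbil =
  fixes B :: "real^'n \<Rightarrow> real^'n \<Rightarrow> real"
  assumes bb: "bounded_bilinear B" and sym: "\<And>x y. B x y = B y x"
begin

interpretation b: bounded_bilinear B by (rule bb)

definition good :: "(real^'n) set \<Rightarrow> bool" where
  "good S \<longleftrightarrow> finite S \<and> (\<forall>b\<in>S. norm b = 1) \<and> pairwise orthogonal S \<and>
     (\<forall>b\<in>S. \<forall>b'\<in>S. b \<noteq> b' \<longrightarrow> B b b' = 0) \<and>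
     (\<forall>b\<in>S. \<forall>x. (\<forall>b'\<in>S. orthogonal b' x) \<longrightarrow> B b x = 0)"

lemma quad_expand: "B (e + t *\<^sub>R w) (e + t *\<^sub>R w) = B e e + 2 * t * B e w + t^2 * B w w"
  by (simp add: b.add_left b.add_right b.scaleR_left b.scaleR_right sym[of w e] power2_eq_square algebra_simps)

lemma step:
  assumes g: "good S" and c: "card S < CARD('n)"
  shows "\<exists>e. e \<notin> S \<and> good (insert e S)"
proof -
  have fin: "finite S" using g by (simp add: good_def)
  have "dim S \<le> card S" using dim_le_card[OF span_superset fin] .
  then have "dim S < DIM(real^'n)" using c by simp
  then obtain x where x0: "x \<noteq> 0" and xo: "\<And>y. y \<in> span S \<Longrightarrow> orthogonal x y"
    using orthogonal_to_subspace_exists by blast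
  define W where "W = {z. \<forall>b\<in>S. orthogonal b z}"
  have W_eq: "W = (\<Inter>b\<in>S. {z. inner b z = 0})" by (auto simp: W_def orthogonal_def)
  have clW: "closed W" unfolding W_eq by (auto intro!: closed_INT closed_hyperplane)
  define K where "K = W \<inter> sphere 0 1"
  have cK: "compact K" unfolding K_def by (intro closed_Int_compact clW compact_sphere)
  have xW: "x \<in> W" using xo span_base by (auto simp: W_def orthogonal_commute)
  have Wsc: "a *\<^sub>R z \<in> W" if "z \<in> W" for a z using that by (auto simp: W_def orthogonal_clauses)
  have Wadd: "z + z' \<in> W" if "z \<in> W" "z' \<in> W" for z z' using that by (auto simp: W_def orthogonal_clauses)
  have "(1 / norm x) *\<^sub>R x \<in> K" using x0 Wsc[OF xW] by (auto simp: K_def)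
  then have Kne: "K \<noteq> {}" by auto
  have ct: "continuous_on K (\<lambda>z. B z z)" by (intro b.continuous_on continuous_on_id)
  obtain e where eK: "e \<in> K" and emax: "\<forall>z\<in>K. B z z \<le> B e e"
    using continuous_attains_sup[OF cK Kne ct] by blast
  define l where "l = B e e"
  have eW: "e \<in> W" and en: "norm e = 1" using eK by (auto simp: K_def)
  have maxW: "B z z \<le> l * (norm z)^2" if "z \<in> W" for z
  proof (cases "z = 0")
    case True then show ?thesis by (simp add: b.zero_left)
  next
    case False
    then have "(1 / norm z) *\<^sub>R z \<in> K" using Wsc[OF that] by (auto simp: K_def)
    then have "B ((1 / norm z) *\<^sub>R z) ((1 / norm z) *\<^sub>R z) \<le> l" using emax l_def by auto
    then have "B z z / (norm z)^2 \<le> l" by (simp add: b.scaleR_left b.scaleR_right power2_eq_square)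
    then show ?thesis using False by (simp add: divide_le_eq)
  qed
  have crit: "B e w = 0" if wW: "w \<in> W" and ow: "orthogonal e w" for w
  proof (rule ccontr)
    assume bne: "B e w \<noteq> 0"
    define C where "C = l * (norm w)^2 - B w w"
    have ineq: "2 * t * B e w \<le> t^2 * C" for t
    proof -
      have "B (e + t *\<^sub>R w) (e + t *\<^sub>R w) \<le> l * (norm (e + t *\<^sub>R w))^2"
        by (rule maxW[OF Wadd[OF eW Wsc[OF wW]]])
      moreover have "(norm (e + t *\<^sub>R w))^2 = 1 + t^2 * (norm w)^2"
      proof -
        have "(norm (e + t *\<^sub>R w))^2 = (e + t *\<^sub>R w) \<bullet> (e + t *\<^sub>R w)" by (rule power2_norm_eq_inner)
        also have "\<dots> = e \<bullet> e + 2 * t * (e \<bullet> w) + t^2 * (w \<bullet> w)"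
          by (simp add: inner_add_left inner_add_right inner_commute algebra_simps power2_eq_square)
        also have "\<dots> = 1 + t^2 * (norm w)^2" using en ow by (simp add: orthogonal_def dot_square_norm)
        finally show ?thesis .
      qed
      ultimately show ?thesis using quad_expand[of e t w] by (simp add: C_def l_def algebra_simps)
    qed
    define t where "t = B e w / (\<bar>C\<bar> + 1)"
    have pos: "\<bar>C\<bar> + 1 > 0" by simp
    define a where "a = \<bar>C\<bar> + 1"
    have ta: "t * a = B e w" unfolding t_def a_def using pos by simp
    have "2 * t * B e w * a^2 \<le> t^2 * C * a^2" using ineq[of t] by (rule mult_right_mono) simp
    moreover have "2 * t * B e w * a^2 = 2 * (B e w)^2 * a" by (simp add: ta[symmetric] power2_eq_square algebra_simps)
    moreover have "t^2 * C * a^2 = (B e w)^2 * C" by (simp add: ta[symmetric] power2_eq_square algebra_simps)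
    ultimately have "2 * (B e w)^2 * a \<le> (B e w)^2 * C" by linarith
    then have "2 * (B e w)^2 * (\<bar>C\<bar> + 1) \<le> (B e w)^2 * C" by (simp add: a_def)
    moreover have "(B e w)^2 > 0" using bne by simp
    ultimately have "2 * (\<bar>C\<bar> + 1) \<le> C"
      using mult_le_cancel_left_pos[of "(B e w)^2" "2 * (\<bar>C\<bar> + 1)" C] by (simp add: algebra_simps)
    then show False by (simp add: abs_if split: if_splits)
  qed
  have enS: "e \<notin> S"
  proof
    assume "e \<in> S"
    then have "orthogonal e e" using eW by (auto simp: W_def)
    then show False using en by (simp add: orthogonal_def)
  qed
  have "good (insert e S)"
    unfolding good_def
  proof (intro conjI ballI allI impI)
    show "finite (insert e S)" using fin by simp
  next
    fix b assume "b \<in> insert e S" then show "norm b = 1" using en g by (auto simp: good_def)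
  next
    show "pairwise orthogonal (insert e S)"
      using g eW unfolding good_def pairwise_insert W_def by (auto simp: orthogonal_commute)
  next
    fix b b' assume bb': "b \<in> insert e S" "b' \<in> insert e S" "b \<noteq> b'"
    have eb: "B b e = 0" if "b \<in> S" for b using g that eW by (auto simp: good_def W_def)
    show "B b b' = 0"
      using bb' g eb sym by (auto simp: good_def)
  next
    fix b x assume b: "b \<in> insert e S" and ox: "\<forall>b'\<in>insert e S. orthogonal b' x"
    then have xW': "x \<in> W" by (auto simp: W_def)
    show "B b x = 0"
    proof (cases "b = e")
      case True then show ?thesis using crit[OF xW'] ox by auto
    next
      case False then show ?thesis using b g ox by (auto simp: good_def)
    qed
  qed
  then show ?thesis using enS by blast
qed

lemma exists_good: "k \<le> CARD('n) \<Longrightarrow> \<exists>S. good S \<and> card S = k"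
proof (induction k)
  case 0
  show ?case by (rule exI[of _ "{}"]) (simp add: good_def)
next
  case (Suc k)
  then obtain S where "good S" "card S = k" by auto
  moreover then obtain e where "e \<notin> S" "good (insert e S)" using step Suc.prems by fastforce
  ultimately show ?case using good_def by (intro exI[of _ "insert e S"]) auto
qed

lemma spectral:
  "\<exists>(Q::real^'n \<Rightarrow> real^'n) (lam::'n \<Rightarrow> real). orthogonal_transformation Q \<and>
     (\<forall>y. B y y = (\<Sum>k\<in>UNIV. lam k * (Q y $ k)^2)) \<and>
     (\<forall>k. \<exists>v. norm v = 1 \<and> lam k = B v v) \<and>
     (\<Sum>k\<in>UNIV. lam k) = (\<Sum>i\<in>UNIV. B (axis i 1) (axis i 1))"
proof -
  obtain S where g: "good S" and cS: "card S = CARD('n)" using exists_good by blast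
  have fin: "finite S" and nS: "\<And>b. b \<in> S \<Longrightarrow> norm b = 1" and po: "pairwise orthogonal S"
    and Bp: "\<And>b b'. b \<in> S \<Longrightarrow> b' \<in> S \<Longrightarrow> b \<noteq> b' \<Longrightarrow> B b b' = 0"
    using g by (auto simp: good_def)
  have z: "0 \<notin> S" using nS by force
  have ind: "independent S" by (rule pairwise_orthogonal_independent[OF po z])
  have "dim S = DIM(real^'n)" using dim_eq_card_independent[OF ind] cS by simp
  then have spS: "span S = UNIV" using dim_eq_full by blast
  have ex: "(\<Sum>b\<in>S. (y \<bullet> b) *\<^sub>R b) = y" for y
    using orthonormal_basis_expand[OF po nS _ fin] spS by auto
  have Bexp: "B y y = (\<Sum>b\<in>S. (y \<bullet> b)^2 * B b b)" for y
  proof -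
    have "B y y = B (\<Sum>b\<in>S. (y \<bullet> b) *\<^sub>R b) (\<Sum>b\<in>S. (y \<bullet> b) *\<^sub>R b)" by (simp only: ex)
    also have "\<dots> = (\<Sum>b\<in>S. \<Sum>b'\<in>S. (y \<bullet> b) * (y \<bullet> b') * B b b')"
      by (simp add: b.sum_left b.sum_right b.scaleR_left b.scaleR_right sum_distrib_left algebra_simps) (subst sum.swap, simp add: sym mult_ac)
    also have "\<dots> = (\<Sum>b\<in>S. (y \<bullet> b)^2 * B b b)"
    proof (rule sum.cong[OF refl])
      fix b assume b: "b \<in> S"
      have "(\<Sum>b'\<in>S. (y \<bullet> b) * (y \<bullet> b') * B b b') = (\<Sum>b'\<in>S. if b = b' then (y \<bullet> b)^2 * B b b else 0)"
        by (rule sum.cong[OF refl]) (auto simp: Bp b power2_eq_square)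
      also have "\<dots> = (y \<bullet> b)^2 * B b b" using sum.delta'[OF fin, of b] b by simp
      finally show "(\<Sum>b'\<in>S. (y \<bullet> b) * (y \<bullet> b') * B b b') = (y \<bullet> b)^2 * B b b" .
    qed
    finally show ?thesis .
  qed
  have nexp: "y \<bullet> y = (\<Sum>b\<in>S. (y \<bullet> b)^2)" for y
  proof -
    have "y \<bullet> y = y \<bullet> (\<Sum>b\<in>S. (y \<bullet> b) *\<^sub>R b)" by (simp only: ex)
    also have "\<dots> = (\<Sum>b\<in>S. (y \<bullet> b)^2)" by (simp add: inner_sum_right power2_eq_square)
    finally show ?thesis .
  qed
  obtain \<sigma> :: "'n \<Rightarrow> real^'n" where bij: "bij_betw \<sigma> UNIV S"
    using finite_same_card_bij[of "UNIV::'n set" S] fin cS by auto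
  have \<sigma>S: "\<sigma> k \<in> S" for k using bij by (auto simp: bij_betw_def)
  define Q where "Q = (\<lambda>y::real^'n. \<chi> k. \<sigma> k \<bullet> y)"
  define lam where "lam = (\<lambda>k. B (\<sigma> k) (\<sigma> k))"
  have Qk: "Q y $ k = \<sigma> k \<bullet> y" for y k by (simp add: Q_def)
  have reidx: "(\<Sum>k\<in>UNIV. f (\<sigma> k)) = (\<Sum>b\<in>S. f b)" for f :: "real^'n \<Rightarrow> real"
    using sum.reindex_bij_betw[OF bij] .
  have lin: "linear Q"
    unfolding linear_iff by (auto simp: vec_eq_iff Qk inner_add_right)
  have "Q y \<bullet> Q y = y \<bullet> y" for y
  proof -
    have "Q y \<bullet> Q y = (\<Sum>k\<in>UNIV. (\<sigma> k \<bullet> y)^2)" by (simp add: inner_vec_def Qk power2_eq_square)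
    also have "\<dots> = (\<Sum>b\<in>S. (b \<bullet> y)^2)" by (rule reidx)
    also have "\<dots> = y \<bullet> y" using nexp[of y] by (simp add: inner_commute)
    finally show ?thesis .
  qed
  then have ot: "orthogonal_transformation Q" using lin by (simp add: orthogonal_transformation norm_eq)
  have sp: "B y y = (\<Sum>k\<in>UNIV. lam k * (Q y $ k)^2)" for y
  proof -
    have "(\<Sum>k\<in>UNIV. lam k * (Q y $ k)^2) = (\<Sum>k\<in>UNIV. (\<lambda>b. B b b * (b \<bullet> y)^2) (\<sigma> k))"
      by (simp add: lam_def Qk)
    also have "\<dots> = (\<Sum>b\<in>S. B b b * (b \<bullet> y)^2)" by (rule reidx)
    also have "\<dots> = B y y" using Bexp[of y] by (simp add: inner_commute mult.commute)
    finally show ?thesis by simp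
  qed
  have wit: "\<exists>v. norm v = 1 \<and> lam k = B v v" for k using nS[OF \<sigma>S[of k]] by (auto simp: lam_def)
  have tr: "(\<Sum>k\<in>UNIV. lam k) = (\<Sum>i\<in>UNIV. B (axis i 1) (axis i 1))"
  proof -
    have "(\<Sum>i\<in>UNIV. B (axis i 1) (axis i 1)) = (\<Sum>i\<in>UNIV. \<Sum>k\<in>UNIV. lam k * (\<sigma> k $ i)^2)"
      by (simp add: sp Qk inner_axis)
    also have "\<dots> = (\<Sum>k\<in>UNIV. lam k * (\<Sum>i\<in>UNIV. (\<sigma> k $ i)^2))"
      by (subst sum.swap) (simp add: sum_distrib_left)
    also have "\<dots> = (\<Sum>k\<in>UNIV. lam k)"
    proof (rule sum.cong[OF refl])
      fix k
      have "(\<Sum>i\<in>UNIV. (\<sigma> k $ i)^2) = \<sigma> k \<bullet> \<sigma> k" by (simp add: inner_vec_def power2_eq_square)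
      also have "\<dots> = 1" using nS[OF \<sigma>S[of k]] by (simp add: dot_square_norm)
      finally show "lam k * (\<Sum>i\<in>UNIV. (\<sigma> k $ i)^2) = lam k" by simp
    qed
    finally show ?thesis by simp
  qed
  show ?thesis using ot sp wit tr by blast
qed

end



lemma hopf:
  fixes h :: "real^'n \<Rightarrow> real" and y z :: "real^'n"
  assumes c: "c2 U h Dh D2h" and U: "open U" and sup: "\<forall>x\<in>U. lap D2h x \<le> 0"
    and d: "d > 0" and cb: "cball y d \<subseteq> U" and pos: "\<forall>x\<in>ball y d. h x > 0"
    and z: "dist y z = d" and hz: "h z = 0" and nn: "\<forall>x\<in>U. 0 \<le> h x"
  shows False
proof -
  define N where "N = real CARD('n)"
  have N: "N > 0" unfolding N_def by simp
  define \<beta> where "\<beta> = N / d^2"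
  have \<beta>: "\<beta> > 0" "\<beta> * d^2 = N" using N d by (auto simp: \<beta>_def)
  define s where "s = (\<lambda>x::real^'n. (x-y)\<bullet>(x-y))"
  have sd: "s x = (dist x y)^2" for x by (simp add: s_def dist_norm power2_norm_eq_inner)
  have s_cont: "continuous_on S s" for S unfolding s_def by (intro continuous_intros)
  define s0 where "s0 = d^2 * (N+1) / (N+2)"
  have s0: "0 < s0" "s0 < d^2" using N d by (auto simp: s0_def field_simps add_pos_pos)
  define v where "v = (\<lambda>x. (d^2 - (x-y)\<bullet>(x-y)) + \<beta> * (d^2 - (x-y)\<bullet>(x-y))^2)"
  define Dv where "Dv = (\<lambda>x k. - (1 + 2*\<beta>*(d^2 - (x-y)\<bullet>(x-y))) * (2 * ((x-y)\<bullet>k)))"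
  define D2v where "D2v = (\<lambda>x k w. 8*\<beta>*((x-y)\<bullet>k)*((x-y)\<bullet>w) - 2*(1 + 2*\<beta>*(d^2 - (x-y)\<bullet>(x-y)))*(k\<bullet>w))"
  have cv: "c2 U v Dv D2v" unfolding v_def Dv_def D2v_def by (rule barrier_c2)
  have lapv: "lap D2v x \<ge> 2 * N" if "s0 \<le> s x" for x
  proof -
    have e: "lap D2v x = 8*\<beta>* s x - 2 * N * (1 + 2*\<beta>*(d^2 - s x))"
      unfolding D2v_def s_def N_def by (rule barrier_lap)
    have "\<beta> * s0 = N * (N+1) / (N+2)" using \<beta> unfolding s0_def by (simp add: field_simps)
    moreover have "\<beta> * s0 \<le> \<beta> * s x" using that \<beta> by simp
    ultimately have "N * (N+1) / (N+2) \<le> \<beta> * s x" by simp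
    then have X: "N^2 + N \<le> (N+2) * (\<beta> * s x)" using N by (simp add: field_simps power2_eq_square)
    have "8*\<beta>* s x - 2 * N * (1 + 2*\<beta>*(d^2 - s x)) = 4 * ((N+2) * (\<beta> * s x)) - 2*N - 4*N^2"
      using \<beta>(2) by (simp add: algebra_simps power2_eq_square)
    then show ?thesis using e X by linarith
  qed
  define A where "A = {x. s0 < s x \<and> s x < d^2}"
  have oA: "open A" unfolding A_def Collect_conj_eq
    by (intro open_Int open_Collect_less s_cont continuous_on_const)
  define Cl where "Cl = {x. s0 \<le> s x \<and> s x \<le> d^2}"
  have cCl: "closed Cl" unfolding Cl_def Collect_conj_eq
    by (intro closed_Int closed_Collect_le s_cont continuous_on_const)
  have sle: "s x \<le> d^2 \<Longrightarrow> x \<in> cball y d" for x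
    using power2_le_imp_le[of "dist x y" d] d by (simp add: sd dist_commute)
  have slt: "s x < d^2 \<Longrightarrow> x \<in> ball y d" for x
    using power2_less_imp_less[of "dist x y" d] d by (simp add: sd dist_commute)
  have ClA: "closure A \<subseteq> Cl" by (rule closure_minimal[OF _ cCl]) (auto simp: A_def Cl_def)
  have ClU: "Cl \<subseteq> cball y d" using sle by (auto simp: Cl_def)
  have "A \<subseteq> ball y d" using slt by (auto simp: A_def)
  then have AU: "A \<subseteq> U" using cb ball_subset_cball by blast
  have "A \<subseteq> cball y d" using ClA ClU closure_subset by blast
  then have "bounded A" by (meson bounded_cball bounded_subset)
  then have cpA: "compact (closure A)" by (simp add: compact_closure)
  define Si where "Si = {x. s x = s0}"
  have SiU: "Si \<subseteq> ball y d" using slt s0(2) by (auto simp: Si_def)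
  have cSi: "compact Si"
  proof -
    have "closed Si" unfolding Si_def by (intro closed_Collect_eq s_cont continuous_on_const)
    moreover have "bounded Si" using SiU by (meson bounded_ball bounded_subset)
    ultimately show ?thesis by (simp add: compact_eq_bounded_closed)
  qed
  have "\<forall>x\<in>U. isCont h x" using c unfolding c2_def by (blast intro: has_derivative_continuous)
  then have hcont: "continuous_on U h" by (simp add: continuous_at_imp_continuous_on)
  obtain m where m: "m > 0" "\<forall>x\<in>Si. m \<le> h x"
  proof (cases "Si = {}")
    case True then show ?thesis using that[of 1] by auto
  next
    case False
    have "Si \<subseteq> U" using SiU ball_subset_cball cb by blast
    then have "continuous_on Si h" using continuous_on_subset[OF hcont] by blast
    then obtain q where "q \<in> Si" "\<forall>x\<in>Si. h q \<le> h x" using continuous_attains_inf[OF cSi False] by blast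
    then show ?thesis using that[of "h q"] pos SiU by auto
  qed
  define G0 where "G0 = (d^2 - s0) + \<beta> * (d^2 - s0)^2"
  have G0: "G0 > 0" using s0 \<beta> by (simp add: G0_def add_pos_nonneg)
  define \<epsilon> where "\<epsilon> = m / G0"
  have \<epsilon>: "\<epsilon> > 0" using m G0 by (simp add: \<epsilon>_def)
  define k where "k = (\<lambda>x. h x - \<epsilon> * v x)"
  have ck: "c2 U k (\<lambda>y w. Dh y w - \<epsilon> * Dv y w) (\<lambda>y w u. D2h y w u - \<epsilon> * D2v y w u)"
    unfolding k_def by (intro c2_diff c2_cmult c cv)
  have vs: "v x = (d^2 - s x) + \<beta> * (d^2 - s x)^2" for x by (simp add: v_def s_def)
  have kge: "\<forall>x\<in>A. 0 \<le> k x"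
  proof (rule ccontr)
    assume "\<not> ?thesis"
    then obtain p where p: "p \<in> A" "k p < 0" by (auto simp: not_le)
    have "\<forall>x\<in>U. isCont k x" using ck unfolding c2_def by (blast intro: has_derivative_continuous)
    then have "continuous_on U k" by (simp add: continuous_at_imp_continuous_on)
    moreover have "closure A \<subseteq> U" using ClA ClU cb by blast
    ultimately have kcont: "continuous_on (closure A) k" using continuous_on_subset by blast
    have ne: "closure A \<noteq> {}" using p closure_subset by blast
    obtain q where q: "q \<in> closure A" "\<forall>x\<in>closure A. k q \<le> k x"
      using continuous_attains_inf[OF cpA ne kcont] by blast
    have "p \<in> closure A" using p(1) closure_subset by blast
    then have "k q \<le> k p" using q(2) by blast
    then have kq: "k q < 0" using p(2) by linarith
    have qCl: "q \<in> Cl" using q ClA by auto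
    have qU: "q \<in> U" using qCl ClU cb by auto
    have "s0 \<le> s q" "s q \<le> d^2" using qCl by (auto simp: Cl_def)
    then have "s q = s0 \<or> s q = d^2 \<or> (s0 < s q \<and> s q < d^2)" by linarith
    then consider "s q = s0" | "s q = d^2" | "q \<in> A" by (auto simp: A_def)
    then show False
    proof cases
      case 1
      then have "q \<in> Si" by (simp add: Si_def)
      then have "m \<le> h q" using m by auto
      moreover have "\<epsilon> * v q = m" using 1 G0 by (simp add: vs \<epsilon>_def G0_def)
      ultimately show False using kq by (simp add: k_def)
    next
      case 2
      then have "v q = 0" by (simp add: vs)
      then show False using kq nn qU by (auto simp: k_def)
    next
      case 3
      have "c2 A k (\<lambda>y w. Dh y w - \<epsilon> * Dv y w) (\<lambda>y w u. D2h y w u - \<epsilon> * D2v y w u)"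
        using ck AU by (rule c2_subset)
      then have "0 \<le> lap (\<lambda>y w u. D2h y w u - \<epsilon> * D2v y w u) q"
        using c2_min_lap[OF _ oA 3] q closure_subset by blast
      also have "\<dots> = lap D2h q - \<epsilon> * lap D2v q"
        by (simp add: lap_def sum_subtractf sum_distrib_left)
      also have "\<dots> < 0"
      proof -
        have "lap D2v q \<ge> 2 * N" using 3 by (intro lapv) (simp add: A_def)
        then have "lap D2v q > 0" using N by linarith
        then have "\<epsilon> * lap D2v q > 0" using \<epsilon> by (rule mult_pos_pos[rotated])
        moreover have "lap D2h q \<le> 0" using sup qU by blast
        ultimately show ?thesis by linarith
      qed
      finally show False by simp
    qed
  qed
  define w where "w = y - z"
  have nw: "norm w = d" using z by (simp add: w_def dist_norm)
  have zU: "z \<in> U" using z cb by auto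
  have segc: "z + t *\<^sub>R w \<in> cball y d" if "0 \<le> t" "t \<le> 1" for t
  proof -
    have "y - (z + t *\<^sub>R w) = (1 - t) *\<^sub>R w" by (simp add: w_def algebra_simps)
    then have "dist y (z + t *\<^sub>R w) = (1 - t) * d" using that nw by (simp add: dist_norm)
    then show ?thesis using that d by (simp add: mult_le_cancel_right1)
  qed
  have sxt: "s (z + t *\<^sub>R w) = (1-t)^2 * d^2" for t
  proof -
    have "z + t *\<^sub>R w - y = - ((1 - t) *\<^sub>R w)" by (simp add: w_def algebra_simps)
    then show ?thesis using nw by (simp add: s_def power2_norm_eq_inner[symmetric] power_mult_distrib)
  qed
  have Dhz: "Dh z = (\<lambda>v. 0)"
    using differential_zero_maxmin[OF zU U, of h "Dh z"] c zU nn hz unfolding c2_def by auto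
  have "continuous_on (cball y d) (\<lambda>x. D2h x w w)"
    using c cb unfolding c2_def by (meson continuous_on_subset)
  moreover have "cball y d \<noteq> {}" using d by auto
  ultimately obtain xm where "xm \<in> cball y d" "\<forall>x\<in>cball y d. D2h x w w \<le> D2h xm w w"
    using continuous_attains_sup[OF compact_cball] by blast
  then obtain C where C: "\<forall>x\<in>cball y d. D2h x w w \<le> C" by blast
  define t where "t = min (1 / (4 * (N+2))) (\<epsilon> * d^2 / (\<bar>C\<bar> + 1))"
  have t: "t > 0" "t \<le> 1 / (4 * (N+2))" "t \<le> \<epsilon> * d^2 / (\<bar>C\<bar> + 1)"
    using N \<epsilon> d by (auto simp: t_def)
  have t1: "t < 1 / 2"
  proof -
    have "1 / (4 * (N+2)) < 1/2" using N by (simp add: field_simps)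
    then show ?thesis using t by linarith
  qed
  have xA: "z + t *\<^sub>R w \<in> A"
  proof -
    have "(1-t)^2 \<ge> 1 - 2*t" by (simp add: power2_eq_square algebra_simps)
    moreover have "1 - 2*t > (N+1)/(N+2)"
    proof -
      have e2: "2 * (1 / (4 * (N+2))) = 1 / (2 * (N+2))" using N by (simp add: field_simps)
      have "2 * t \<le> 2 * (1 / (4 * (N+2)))" using t(2) by linarith
      then have "2 * t \<le> 1 / (2 * (N+2))" using e2 by (rule ord_le_eq_trans)
      moreover have "1 / (2 * (N+2)) < 1 / (N+2)" using N by (simp add: field_simps)
      moreover have "(N+1)/(N+2) = 1 - 1/(N+2)" using N by (simp add: field_simps)
      ultimately show ?thesis by linarith
    qed
    ultimately have a: "(1-t)^2 > (N+1)/(N+2)" by linarith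
    have "s0 = (N+1)/(N+2) * d^2" by (simp add: s0_def)
    also have "\<dots> < (1-t)^2 * d^2" by (rule mult_strict_right_mono[OF a]) (use d in simp)
    finally have "s0 < s (z + t *\<^sub>R w)" by (simp add: sxt)
    moreover have "(1-t)^2 < 1" using t t1 by (simp add: power2_eq_square algebra_simps)
    then have "s (z + t *\<^sub>R w) < d^2" using d by (simp add: sxt)
    ultimately show ?thesis by (simp add: A_def)
  qed
  have low: "\<epsilon> * d^2 * t \<le> h (z + t *\<^sub>R w)"
  proof -
    have "0 \<le> k (z + t *\<^sub>R w)" using kge xA by auto
    then have "\<epsilon> * v (z + t *\<^sub>R w) \<le> h (z + t *\<^sub>R w)" by (simp add: k_def)
    moreover have "d^2 * t \<le> v (z + t *\<^sub>R w)"
    proof -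
      have "d^2 - s (z + t *\<^sub>R w) = d^2 * (2*t - t^2)" by (simp add: sxt power2_eq_square algebra_simps)
      moreover have "t \<le> 2*t - t^2" using t t1 by (simp add: power2_eq_square)
      ultimately have "d^2 * t \<le> d^2 - s (z + t *\<^sub>R w)" using d by (simp add: mult_left_mono)
      then show ?thesis using \<beta> by (simp add: vs) (smt (verit) mult_nonneg_nonneg zero_le_power2)
    qed
    ultimately show ?thesis using \<epsilon> by (smt (verit) mult.assoc mult_left_mono)
  qed
  have seg: "z + \<tau> *\<^sub>R w \<in> U" if "0 \<le> \<tau>" "\<tau> \<le> t" for \<tau> using segc[of \<tau>] that t1 cb by auto
  obtain \<tau> where \<tau>: "0 < \<tau>" "\<tau> < t" and eq: "h (z + t *\<^sub>R w) = h z + t * Dh z w + D2h (z + \<tau> *\<^sub>R w) w w / 2 * t^2"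
    using c2_taylor[OF c t(1) seg] by blast
  have "D2h (z + \<tau> *\<^sub>R w) w w \<le> C" using C segc[of \<tau>] \<tau> t1 by auto
  then have up: "h (z + t *\<^sub>R w) \<le> C / 2 * t^2" using eq hz Dhz t by (simp add: mult_right_mono)
  have "\<epsilon> * d^2 * t \<le> C / 2 * t^2" using low up by linarith
  then have "\<epsilon> * d^2 \<le> C / 2 * t" using t by (simp add: power2_eq_square)
  also have "\<dots> \<le> (\<bar>C\<bar> + 1) / 2 * t" using t by (intro mult_right_mono) auto
  also have "\<dots> \<le> (\<bar>C\<bar> + 1) / 2 * (\<epsilon> * d^2 / (\<bar>C\<bar> + 1))" using t by (intro mult_left_mono) auto
  also have "\<dots> = \<epsilon> * d^2 / 2" by (simp add: field_simps)
  finally show False using \<epsilon> d by simp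
qed

lemma strong_min:
  fixes h :: "real^'n \<Rightarrow> real"
  assumes c: "c2 U h Dh D2h" and U: "open U" and cU: "connected U"
    and sup: "\<forall>x\<in>U. lap D2h x \<le> 0" and nn: "\<forall>x\<in>U. 0 \<le> h x"
    and x0: "x0 \<in> U" "h x0 = 0"
  shows "\<forall>x\<in>U. h x = 0"
proof (rule ccontr)
  assume "\<not> ?thesis"
  then obtain p where p: "p \<in> U" "h p > 0" using nn by (metis less_eq_real_def)
  have "\<forall>x\<in>U. isCont h x" using c unfolding c2_def by (blast intro: has_derivative_continuous)
  then have hcont: "continuous_on U h" by (simp add: continuous_at_imp_continuous_on)
  define Z where "Z = {x\<in>U. h x = 0}"
  have "\<exists>z\<in>Z. \<forall>r>0. \<exists>y. y \<in> U \<and> dist z y < r \<and> h y > 0"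
  proof (rule ccontr)
    assume "\<not> ?thesis"
    then have loc: "\<forall>z\<in>Z. \<exists>r>0. \<forall>y. y \<in> U \<and> dist z y < r \<longrightarrow> h y \<le> 0"
      by (metis not_less)
    have oZ: "open Z"
      unfolding open_contains_ball
    proof
      fix z assume zZ: "z \<in> Z"
      then obtain r where r: "r > 0" "\<forall>y. y \<in> U \<and> dist z y < r \<longrightarrow> h y \<le> 0" using loc by blast
      have "z \<in> U" using zZ by (simp add: Z_def)
      then obtain e where e: "e > 0" "ball z e \<subseteq> U" using U open_contains_ball by blast
      have "ball z (min r e) \<subseteq> Z"
      proof
        fix y assume "y \<in> ball z (min r e)"
        then have "y \<in> U" "dist z y < r" using e by auto
        then show "y \<in> Z" using r nn by (force simp: Z_def)
      qed
      then show "\<exists>e>0. ball z e \<subseteq> Z" using r e by (intro exI[of _ "min r e"]) auto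
    qed
    have oP: "open (U \<inter> h -` {0<..})" by (rule continuous_open_preimage[OF hcont U]) simp
    have "Z \<inter> (U \<inter> h -` {0<..}) \<inter> U = {}" by (auto simp: Z_def)
    moreover have "U \<subseteq> Z \<union> (U \<inter> h -` {0<..})" using nn by (force simp: Z_def)
    ultimately have "Z \<inter> U = {} \<or> (U \<inter> h -` {0<..}) \<inter> U = {}"
      using connectedD[OF cU oZ oP] by blast
    then show False using x0 p by (auto simp: Z_def)
  qed
  then obtain zs where zs: "zs \<in> U" "h zs = 0" and near: "\<forall>r>0. \<exists>y. y \<in> U \<and> dist zs y < r \<and> h y > 0"
    by (auto simp: Z_def)
  obtain e where e: "e > 0" "ball zs e \<subseteq> U" using U zs open_contains_ball by blast
  define r where "r = e / 3"
  have r: "r > 0" using e by (simp add: r_def)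
  obtain y where y: "y \<in> U" "dist zs y < r" "h y > 0" using near r by blast
  define \<rho> where "\<rho> = dist y zs"
  have \<rho>: "\<rho> < r" using y by (simp add: \<rho>_def dist_commute)
  have cbU: "cball y \<rho> \<subseteq> U"
  proof
    fix x assume "x \<in> cball y \<rho>"
    then have "dist zs x \<le> dist zs y + dist y x" "dist y x \<le> \<rho>" using dist_triangle by auto
    then have "dist zs x < e" using y \<rho> r_def e(1) by linarith
    then show "x \<in> U" using e by auto
  qed
  define K where "K = {x \<in> cball y \<rho>. h x = 0}"
  have cK: "closed K" unfolding K_def
    by (rule continuous_closed_preimage_constant[OF continuous_on_subset[OF hcont cbU] closed_cball])
  have zsK: "zs \<in> K" using zs by (simp add: K_def \<rho>_def)
  obtain z where zK: "z \<in> K" and zmin: "\<And>x. x \<in> K \<Longrightarrow> dist y z \<le> dist y x"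
    using distance_attains_inf[OF cK] zsK by blast
  define d where "d = dist y z"
  have "z \<noteq> y" using zK y by (auto simp: K_def)
  then have d: "d > 0" by (simp add: d_def)
  have "d \<le> \<rho>" using zmin[OF zsK] by (simp add: d_def \<rho>_def)
  then have cb: "cball y d \<subseteq> U" using cbU by auto
  have pos: "\<forall>x\<in>ball y d. h x > 0"
  proof
    fix x assume x: "x \<in> ball y d"
    then have xU: "x \<in> cball y \<rho>" using \<open>d \<le> \<rho>\<close> by auto
    show "h x > 0"
    proof (rule ccontr)
      assume "\<not> h x > 0"
      then have "h x = 0" using nn xU cbU by force
      then have "x \<in> K" using xU by (simp add: K_def)
      then show False using zmin x by (fastforce simp: d_def)
    qed
  qed
  have "z \<in> U" using zK cbU by (auto simp: K_def)
  show False
    by (rule hopf[OF c U sup d cb pos _ _ nn]) (use zK in \<open>auto simp: K_def d_def\<close>)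
qed



lemma bq_bilinear:
  fixes L :: "(real^'n) \<Rightarrow>\<^sub>L ((real^'n) \<Rightarrow>\<^sub>L real)"
  shows "bounded_bilinear (\<lambda>x y. - (blinfun_apply (blinfun_apply L x) y + blinfun_apply (blinfun_apply L y) x) / 4)"
proof
  fix a a' b b' :: "real^'n" and r :: real
  show "- (blinfun_apply (blinfun_apply L (a + a')) b + blinfun_apply (blinfun_apply L b) (a + a')) / 4 =
        - (blinfun_apply (blinfun_apply L a) b + blinfun_apply (blinfun_apply L b) a) / 4 +
        - (blinfun_apply (blinfun_apply L a') b + blinfun_apply (blinfun_apply L b) a') / 4"
    by (simp only: blinfun.add_left blinfun.add_right) (simp add: field_simps)
  show "- (blinfun_apply (blinfun_apply L a) (b + b') + blinfun_apply (blinfun_apply L (b + b')) a) / 4 =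
        - (blinfun_apply (blinfun_apply L a) b + blinfun_apply (blinfun_apply L b) a) / 4 +
        - (blinfun_apply (blinfun_apply L a) b' + blinfun_apply (blinfun_apply L b') a) / 4"
    by (simp only: blinfun.add_left blinfun.add_right) (simp add: field_simps)
  show "- (blinfun_apply (blinfun_apply L (r *\<^sub>R a)) b + blinfun_apply (blinfun_apply L b) (r *\<^sub>R a)) / 4 =
        r *\<^sub>R (- (blinfun_apply (blinfun_apply L a) b + blinfun_apply (blinfun_apply L b) a) / 4)"
    by (simp only: blinfun.scaleR_left blinfun.scaleR_right real_scaleR_def) (simp add: field_simps)
  show "- (blinfun_apply (blinfun_apply L a) (r *\<^sub>R b) + blinfun_apply (blinfun_apply L (r *\<^sub>R b)) a) / 4 =
        r *\<^sub>R (- (blinfun_apply (blinfun_apply L a) b + blinfun_apply (blinfun_apply L b) a) / 4)"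
    by (simp only: blinfun.scaleR_left blinfun.scaleR_right real_scaleR_def) (simp add: field_simps)
next
  have bd: "\<bar>blinfun_apply (blinfun_apply L x) y\<bar> \<le> norm x * norm y * norm L" for x y :: "real^'n"
  proof -
    have "\<bar>blinfun_apply (blinfun_apply L x) y\<bar> \<le> norm (blinfun_apply L x) * norm y"
      using norm_blinfun[of "blinfun_apply L x" y] by simp
    also have "\<dots> \<le> (norm L * norm x) * norm y" by (intro mult_right_mono norm_blinfun) simp
    finally show ?thesis by (simp add: mult_ac)
  qed
  show "\<exists>K. \<forall>a b. norm (- (blinfun_apply (blinfun_apply L a) b + blinfun_apply (blinfun_apply L b) a) / 4) \<le> norm a * norm b * K"
  proof (intro exI allI)
    fix a b :: "real^'n"
    have "norm (- (blinfun_apply (blinfun_apply L a) b + blinfun_apply (blinfun_apply L b) a) / 4)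
        \<le> (\<bar>blinfun_apply (blinfun_apply L a) b\<bar> + \<bar>blinfun_apply (blinfun_apply L b) a\<bar>) / 4" by simp
    also have "\<dots> \<le> (2 * (norm a * norm b * norm L)) / 4"
    proof (rule divide_right_mono)
      show "\<bar>blinfun_apply (blinfun_apply L a) b\<bar> + \<bar>blinfun_apply (blinfun_apply L b) a\<bar> \<le> 2 * (norm a * norm b * norm L)"
        using bd[of a b] bd[of b a, unfolded mult.commute[of "norm b" "norm a"]] by linarith
    qed simp
    also have "\<dots> \<le> norm a * norm b * norm L" using norm_ge_zero[of L]
      by (simp add: mult_nonneg_nonneg)
    finally show "norm (- (blinfun_apply (blinfun_apply L a) b + blinfun_apply (blinfun_apply L b) a) / 4) \<le> norm a * norm b * norm L" .
  qed
qed

context symbil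
begin

lemma c2_quad:
  "c2 U (\<lambda>x. B (x - x0) (x - x0)) (\<lambda>x k. 2 * B (x - x0) k) (\<lambda>x k w. 2 * B k w)"
  unfolding c2_def
proof (intro conjI ballI allI)
  interpret b: bounded_bilinear B by (rule bb)
  fix x assume "x \<in> U"
  have f: "((\<lambda>x. x - x0) has_derivative (\<lambda>h. h)) (at x)"
    using has_derivative_diff[OF has_derivative_ident has_derivative_const, of x0 "at x"] by simp
  have "((\<lambda>x. B (x - x0) (x - x0)) has_derivative (\<lambda>h. B (x - x0) h + B h (x - x0))) (at x)"
    using b.FDERIV[OF f f] .
  then show "((\<lambda>x. B (x - x0) (x - x0)) has_derivative (\<lambda>k. 2 * B (x - x0) k)) (at x)"
    by (simp add: sym[of _ "x - x0"])
next
  interpret b: bounded_bilinear B by (rule bb)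
  fix x w assume "x \<in> U"
  have f: "((\<lambda>x. x - x0) has_derivative (\<lambda>h. h)) (at x)"
    using has_derivative_diff[OF has_derivative_ident has_derivative_const, of x0 "at x"] by simp
  have "((\<lambda>z. B (z - x0) w) has_derivative (\<lambda>h. B (x - x0) 0 + B h w)) (at x)"
    using b.FDERIV[OF f has_derivative_const[of w "at x"]] .
  then show "((\<lambda>z. 2 * B (z - x0) w) has_derivative (\<lambda>k. 2 * B k w)) (at x)"
    using has_derivative_mult_right[of "\<lambda>z. B (z - x0) w" "\<lambda>k. B k w" "at x" 2]
    by (simp add: b.zero_right)
next
  fix w show "continuous_on U (\<lambda>x. 2 * B w w)" by (rule continuous_on_const)
qed

end


theorem theorem1p4:
  fixes \<Omega> :: "(real^'n) set" and u :: "real^'n \<Rightarrow> real" and M :: real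
  assumes "CARD('n) \<ge> 2"
    and "bounded \<Omega>" and "open \<Omega>"
    and "C2_on \<Omega> u" and "continuous_on (closure \<Omega>) u"
    and "\<forall>x\<in>\<Omega>. laplacian u x = -1"
    and "\<forall>x\<in>frontier \<Omega>. u x = 0"
    and "M = Sup (u ` closure \<Omega>)"
    and "convex \<Omega>"
    and "convex_on \<Omega> (\<lambda>x. sqrt (M - u x))"
  shows "\<exists>(Q :: real^'n \<Rightarrow> real^'n) (c :: real^'n) (a :: 'n \<Rightarrow> real) (R :: real).
           orthogonal_transformation Q \<and> (\<forall>i. a i > 0) \<and> (\<Sum>i\<in>UNIV. a i) = real CARD('n) \<and>
           \<Omega> = {x. (\<Sum>i\<in>UNIV. a i * (Q (x - c) $ i)^2) < R^2} \<and>
           (\<forall>x\<in>\<Omega>. u x = (R^2 - (\<Sum>i\<in>UNIV. a i * (Q (x - c) $ i)^2)) / (2 * real CARD('n)))"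
proof (cases "\<Omega> = {}")
  case True
  have "{x::real^'n. (\<Sum>i\<in>UNIV. 1 * (id (x - 0) $ i)^2) < 0^2} = {}"
    by (auto simp: not_less intro!: sum_nonneg)
  then show ?thesis using True
    by (intro exI[of _ id] exI[of _ 0] exI[of _ "\<lambda>_. 1"] exI[of _ 0]) (auto simp: id_def)
next
  case False
  note bdd = assms(2) and opn = assms(3) and cvx = assms(9)
  obtain Du :: "(real^'n) \<Rightarrow> ((real^'n) \<Rightarrow>\<^sub>L real)" and D2u
    where cu: "c2 \<Omega> u (\<lambda>y. blinfun_apply (Du y)) (\<lambda>y k v. blinfun_apply (blinfun_apply (D2u y) k) v)"
      and d1: "\<forall>x\<in>\<Omega>. (u has_derivative blinfun_apply (Du x)) (at x)"
      and d2: "\<forall>x\<in>\<Omega>. (Du has_derivative blinfun_apply (D2u x)) (at x)"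
    using C2_on_c2[OF assms(4)] by metis
  define D2 where "D2 = (\<lambda>y k v. blinfun_apply (blinfun_apply (D2u y) k) v)"
  have cu': "c2 \<Omega> u (\<lambda>y. blinfun_apply (Du y)) D2" using cu by (simp add: D2_def)
  have lapu: "lap D2 x = -1" if "x \<in> \<Omega>" for x
    using laplacian_eq[OF opn that d1 d2] assms(6) that by (simp add: lap_def D2_def)
  have A1: "\<exists>y\<in>\<Omega>. u y < u z" if "z \<in> \<Omega>" for z
  proof (rule ccontr)
    assume "\<not> ?thesis"
    then have "\<forall>y\<in>\<Omega>. u z \<le> u y" by (auto simp: not_less)
    then have "0 \<le> lap D2 z" by (rule c2_min_lap[OF cu' opn that])
    then show False using lapu[OF that] by simp
  qed
  have cpt: "compact (closure \<Omega>)" using bdd by (simp add: compact_closure)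
  have ne: "closure \<Omega> \<noteq> {}" using False closure_subset by blast
  have intO: "interior \<Omega> = \<Omega>" using opn by (simp add: interior_open)
  have frO: "x \<in> frontier \<Omega>" if "x \<in> closure \<Omega>" "x \<notin> \<Omega>" for x
    using that intO by (simp add: frontier_def)
  obtain zm where zm: "zm \<in> closure \<Omega>" "\<forall>y\<in>closure \<Omega>. u zm \<le> u y"
    using continuous_attains_inf[OF cpt ne assms(5)] by blast
  have "zm \<notin> \<Omega>"
  proof
    assume "zm \<in> \<Omega>"
    then obtain y where "y \<in> \<Omega>" "u y < u zm" using A1 by blast
    moreover have "y \<in> closure \<Omega>" using \<open>y \<in> \<Omega>\<close> closure_subset by blast
    ultimately show False using zm(2) by fastforce
  qed
  then have "u zm = 0" using frO[OF zm(1)] assms(7) by blast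
  then have unn: "\<forall>y\<in>closure \<Omega>. 0 \<le> u y" using zm by auto
  obtain x0 where x0: "x0 \<in> closure \<Omega>" "\<forall>y\<in>closure \<Omega>. u y \<le> u x0"
    using continuous_attains_sup[OF cpt ne assms(5)] by blast
  have Mx0: "M = u x0" unfolding assms(8) by (rule cSup_eq_maximum) (use x0 in auto)
  have Mpos: "M > 0"
  proof (rule ccontr)
    assume "\<not> M > 0"
    have z: "\<forall>y\<in>\<Omega>. u y = 0"
    proof
      fix y assume "y \<in> \<Omega>"
      then have "y \<in> closure \<Omega>" using closure_subset by blast
      then have "u y \<le> M" "0 \<le> u y" using x0(2) unn Mx0 by auto
      then show "u y = 0" using \<open>\<not> M > 0\<close> by linarith
    qed
    obtain z where "z \<in> \<Omega>" using False by blast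
    then obtain y where "y \<in> \<Omega>" "u y < u z" using A1 by blast
    then show False using z \<open>z \<in> \<Omega>\<close> by auto
  qed
  have x0O: "x0 \<in> \<Omega>"
  proof (rule ccontr)
    assume "x0 \<notin> \<Omega>"
    then have "u x0 = 0" using frO[OF x0(1)] assms(7) by blast
    then show False using Mpos Mx0 by simp
  qed
  have uM: "\<forall>y\<in>\<Omega>. u y \<le> M" using x0 Mx0 closure_subset by auto
  have Dx0: "blinfun_apply (Du x0) = (\<lambda>v. 0)"
    by (rule differential_zero_maxmin[OF x0O opn d1[rule_format, OF x0O]]) (use uM Mx0 in auto)
  define Bq where "Bq = (\<lambda>x y. - (blinfun_apply (blinfun_apply (D2u x0) x) y + blinfun_apply (blinfun_apply (D2u x0) y) x) / 4)"
  have Bqq: "Bq y y = - D2 x0 y y / 2" for y by (simp add: Bq_def D2_def)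
  interpret sb: symbil Bq
  proof (rule symbil.intro)
    show "bounded_bilinear Bq" unfolding Bq_def by (rule bq_bilinear)
    show "Bq x y = Bq y x" for x y by (simp add: Bq_def add.commute)
  qed
  interpret bq: bounded_bilinear Bq by (rule sb.bb)
  \<comment> \<open>Step B: lower bound from convexity of the square root\<close>
  have stepB: "Bq (x - x0) (x - x0) \<le> M - u x" if xO: "x \<in> \<Omega>" for x
  proof -
    define v where "v = x - x0"
    have eqc: "x0 + t *\<^sub>R v = (1 - t) *\<^sub>R x0 + t *\<^sub>R x" for t by (simp add: v_def algebra_simps)
    have seg: "x0 + t *\<^sub>R v \<in> \<Omega>" if "0 \<le> t" "t \<le> 1" for t
      unfolding eqc using convexD_alt[OF cvx x0O xO that] .
    have "- (M - u x) \<le> D2 x0 v v / 2"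
    proof (rule c2_lower[OF cu' opn x0O seg])
      fix t :: real assume t: "0 < t" "t \<le> 1"
      have "sqrt (M - u (x0 + t *\<^sub>R v)) \<le> (1 - t) * sqrt (M - u x0) + t * sqrt (M - u x)"
        unfolding eqc using convex_onD[OF assms(10), of t x0 x] t x0O xO by simp
      then have le: "sqrt (M - u (x0 + t *\<^sub>R v)) \<le> t * sqrt (M - u x)" using Mx0 by simp
      have "x0 + t *\<^sub>R v \<in> \<Omega>" using seg t by auto
      then have uxt: "u (x0 + t *\<^sub>R v) \<le> M" using uM by blast
      then have "M - u (x0 + t *\<^sub>R v) = (sqrt (M - u (x0 + t *\<^sub>R v)))^2" by simp
      also have "\<dots> \<le> (t * sqrt (M - u x))^2" by (rule power_mono[OF le]) (use uxt in simp)
      also have "\<dots> = t^2 * (M - u x)" using uM xO by (simp add: power_mult_distrib)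
      finally have "M - u (x0 + t *\<^sub>R v) \<le> t^2 * (M - u x)" .
      then show "t^2 * (- (M - u x)) \<le> u (x0 + t *\<^sub>R v) - u x0 - t * blinfun_apply (Du x0) v"
        using Mx0 Dx0 by (simp add: algebra_simps)
    qed
    then show ?thesis using Bqq[of v] by (simp add: v_def)
  qed
  define h where "h = (\<lambda>x. (M - Bq (x - x0) (x - x0)) - u x)"
  define D2h where "D2h = (\<lambda>y k w. (0 - 2 * Bq k w) - D2 y k w)"
  have ch: "c2 \<Omega> h (\<lambda>y k. (0 - 2 * Bq (y - x0) k) - blinfun_apply (Du y) k) D2h"
    unfolding h_def D2h_def by (intro c2_diff c2_const sb.c2_quad cu')
  have trB: "(\<Sum>i\<in>UNIV. Bq (axis i 1) (axis i 1)) = 1/2"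
    using lapu[OF x0O] by (simp add: Bqq lap_def sum_divide_distrib[symmetric] sum_negf)
  have laph: "lap D2h x \<le> 0" if "x \<in> \<Omega>" for x
  proof -
    have "lap D2h x = - 2 * (\<Sum>i\<in>UNIV. Bq (axis i 1) (axis i 1)) - lap D2 x"
      by (simp add: D2h_def lap_def sum_subtractf sum_distrib_left sum_negf)
    then show ?thesis using trB lapu[OF that] by simp
  qed
  have hnn: "\<forall>x\<in>\<Omega>. 0 \<le> h x"
  proof
    fix x assume "x \<in> \<Omega>" then show "0 \<le> h x" using stepB[of x] by (simp add: h_def)
  qed
  have hx0: "h x0 = 0" using Mx0 by (simp add: h_def bq.zero_left)
  have h0: "\<forall>x\<in>\<Omega>. h x = 0"
    by (rule strong_min[OF ch opn convex_connected[OF cvx] _ hnn x0O hx0]) (use laph in auto)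
  have uform: "u x = M - Bq (x - x0) (x - x0)" if "x \<in> \<Omega>" for x using h0 that by (simp add: h_def)
  define \<phi> where "\<phi> = (\<lambda>x. M - Bq (x - x0) (x - x0))"
  have phic: "continuous_on S \<phi>" for S unfolding \<phi>_def
    by (intro continuous_intros bq.continuous_on continuous_on_diff continuous_on_id continuous_on_const)
  have "closed {x \<in> closure \<Omega>. u x - \<phi> x = 0}"
    by (rule continuous_closed_preimage_constant) (auto intro!: continuous_intros assms(5) phic)
  then have "closure \<Omega> \<subseteq> {x \<in> closure \<Omega>. u x - \<phi> x = 0}"
    by (rule closure_minimal[rotated]) (use uform closure_subset in \<open>auto simp: \<phi>_def\<close>)
  then have fr: "Bq (p - x0) (p - x0) = M" if "p \<in> frontier \<Omega>" for p
    using that assms(7) frontier_def[of \<Omega>] by (force simp: \<phi>_def)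
  have ray: "\<exists>sb>0. Bq v v * sb^2 = M \<and> x0 + sb *\<^sub>R v \<notin> \<Omega> \<and> (\<forall>e. 0 \<le> e \<and> e < sb \<longrightarrow> x0 + e *\<^sub>R v \<in> \<Omega>)"
    if v0: "v \<noteq> 0" for v
  proof -
    have x0i: "x0 \<in> interior \<Omega>" using x0O intO by simp
    obtain sb where sb: "0 < sb" "x0 + sb *\<^sub>R v \<in> frontier \<Omega>" "\<And>e. 0 \<le> e \<Longrightarrow> e < sb \<Longrightarrow> x0 + e *\<^sub>R v \<in> interior \<Omega>"
      using ray_to_frontier[OF bdd x0i v0] by blast
    have "Bq (sb *\<^sub>R v) (sb *\<^sub>R v) = M" using fr[OF sb(2)] by simp
    then have "Bq v v * sb^2 = M" by (simp add: bq.scaleR_left bq.scaleR_right power2_eq_square mult_ac)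
    moreover have "x0 + sb *\<^sub>R v \<notin> \<Omega>" using sb(2) intO by (auto simp: frontier_def)
    ultimately show ?thesis using sb intO by auto
  qed
  have posdef: "Bq v v > 0" if v0: "v \<noteq> 0" for v
  proof -
    obtain sb where "sb > 0" "Bq v v * sb^2 = M" using ray[OF v0] by blast
    then show ?thesis using Mpos by (metis zero_less_mult_pos2 zero_less_power)
  qed
  have Oeq: "\<Omega> = {x. Bq (x - x0) (x - x0) < M}"
  proof (intro set_eqI iffI)
    fix x assume xO: "x \<in> \<Omega>"
    show "x \<in> {x. Bq (x - x0) (x - x0) < M}"
    proof (cases "x = x0")
      case True then show ?thesis using Mpos by (simp add: bq.zero_left)
    next
      case False
      then have v0: "x - x0 \<noteq> 0" by simp
      obtain sb where sb: "sb > 0" "Bq (x - x0) (x - x0) * sb^2 = M" "x0 + sb *\<^sub>R (x - x0) \<notin> \<Omega>"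
        using ray[OF v0] by blast
      have "sb > 1"
      proof (rule ccontr)
        assume "\<not> sb > 1"
        then have "x0 + sb *\<^sub>R (x - x0) \<in> \<Omega>"
          using convexD_alt[OF cvx x0O xO, of sb] sb(1) by (simp add: algebra_simps)
        then show False using sb(3) by simp
      qed
      then have "1 < sb^2" by (simp add: one_less_power)
      then have "Bq (x - x0) (x - x0) * 1 < Bq (x - x0) (x - x0) * sb^2"
        using posdef[OF v0] by (intro mult_strict_left_mono) auto
      then show ?thesis using sb(2) by simp
    qed
  next
    fix x assume "x \<in> {x. Bq (x - x0) (x - x0) < M}"
    then have lt: "Bq (x - x0) (x - x0) < M" by simp
    show "x \<in> \<Omega>"
    proof (cases "x = x0")
      case True then show ?thesis using x0O by simp
    next
      case False
      then have v0: "x - x0 \<noteq> 0" by simp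
      obtain sb where sb: "sb > 0" "Bq (x - x0) (x - x0) * sb^2 = M"
          "\<forall>e. 0 \<le> e \<and> e < sb \<longrightarrow> x0 + e *\<^sub>R (x - x0) \<in> \<Omega>"
        using ray[OF v0] by blast
      have "sb > 1"
      proof (rule ccontr)
        assume "\<not> sb > 1"
        then have "sb^2 \<le> 1" using sb(1) by (simp add: power_le_one)
        then have "Bq (x - x0) (x - x0) * sb^2 \<le> Bq (x - x0) (x - x0) * 1"
          using posdef[OF v0] by (intro mult_left_mono) auto
        then show False using sb(2) lt by simp
      qed
      then show ?thesis using sb(3)[rule_format, of 1] by simp
    qed
  qed
  obtain Q :: "real^'n \<Rightarrow> real^'n" and lam :: "'n \<Rightarrow> real" where ot: "orthogonal_transformation Q"
    and sp: "\<forall>y. Bq y y = (\<Sum>k\<in>UNIV. lam k * (Q y $ k)^2)"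
    and wit: "\<forall>k. \<exists>v. norm v = 1 \<and> lam k = Bq v v"
    and tr: "(\<Sum>k\<in>UNIV. lam k) = (\<Sum>i\<in>UNIV. Bq (axis i 1) (axis i 1))"
    using sb.spectral by blast
  define N where "N = real CARD('n)"
  have N: "N > 0" by (simp add: N_def)
  define a where "a = (\<lambda>k. 2 * N * lam k)"
  define R where "R = sqrt (2 * N * M)"
  have R2: "R^2 = 2 * N * M" using N Mpos by (simp add: R_def)
  have apos: "a k > 0" for k
  proof -
    obtain v where v: "norm v = 1" "lam k = Bq v v" using wit by blast
    then have "v \<noteq> 0" by auto
    then have "lam k > 0" using posdef[of v] v by simp
    then show ?thesis using N by (simp add: a_def)
  qed
  have asum: "(\<Sum>i\<in>UNIV. a i) = N" using tr trB N by (simp add: a_def sum_distrib_left[symmetric])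
  have qa: "(\<Sum>i\<in>UNIV. a i * (Q (x - x0) $ i)^2) = 2 * N * Bq (x - x0) (x - x0)" for x
    using sp by (simp add: a_def sum_distrib_left mult.assoc)
  show ?thesis
  proof (intro exI[of _ Q] exI[of _ x0] exI[of _ a] exI[of _ R] conjI allI ballI)
    show "orthogonal_transformation Q" by (rule ot)
    show "0 < a i" for i by (rule apos)
    show "(\<Sum>i\<in>UNIV. a i) = real CARD('n)" using asum by (simp add: N_def)
    show "\<Omega> = {x. (\<Sum>i\<in>UNIV. a i * (Q (x - x0) $ i)^2) < R^2}"
      unfolding Oeq qa R2 using N by auto
    fix x assume xO: "x \<in> \<Omega>"
    have "(R^2 - (\<Sum>i\<in>UNIV. a i * (Q (x - x0) $ i)^2)) / (2 * real CARD('n))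
        = (2 * N * M - 2 * N * Bq (x - x0) (x - x0)) / (2 * N)" unfolding qa R2 N_def by simp
    also have "\<dots> = M - Bq (x - x0) (x - x0)" using N by (simp add: field_simps)
    also have "\<dots> = u x" using uform[OF xO] by simp
    finally show "u x = (R^2 - (\<Sum>i\<in>UNIV. a i * (Q (x - x0) $ i)^2)) / (2 * real CARD('n))" by simp
  qed
qed


end
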